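(* Let $m\ge1$, let $\mathcal{I}\subseteq\mathcal{M}_m$ be a decreasing monomial set with $r=\max_{f\in\mathcal{I}}\deg(f)$, and let $f,g\in\mathcal{I}_r$ with $h=\gcd(f,g)$ such that $\deg(h)=r-2$. Then \[ \Big|{\rm LTA}(m,2)_h\cdot h\cdot\Big({\rm LTA}(m,2)_{f} \cdot \tfrac{f}{h}+{\rm LTA}(m,2)_{g}\cdot \tfrac{g}{h}\Big)\Big|= |{\rm LTA}(m,2)_h\cdot h|\cdot \Big|{\rm LTA}(m,2)_{f} \cdot \tfrac{f}{h}+{\rm LTA}(m,2)_{g}\cdot \tfrac{g}{h}\Big|. \]
   Context: $\mathbf{R}_m=\mathbb{F}_2[x_0,\dots,x_{m-1}]/(x_0^2-x_0,\dots,x_{m-1}^2-x_{m-1})$. $\mathcal{M}_m$ is the set of monomials $x_0^{i_0}\cdots x_{m-1}^{i_{m-1}}$, $i_j\in\{0,1\}$. For a monomial $f$, $\operatorname{ind}(f)$ is the set of indices of variables dividing $f$, $\deg f=|\operatorname{ind}(f)|$; $\gcd(f,g)$ has $\operatorname{ind}=\operatorname{ind}(f)\cap\operatorname{ind}(g)$; for $h\mid f$, $f/h$ has $\operatorname{ind}=\operatorname{ind}(f)\setminus\operatorname{ind}(h)$. Order: $f\preceq_w g$ iff $\operatorname{ind}(f)\subseteq\operatorname{ind}(g)$; for equal-degree $f=x_{i_1}\cdots x_{i_s}$, $g=x_{j_1}\cdots x_{j_s}$ (increasing indices), $f\preceq_{sh}g$ iff $i_\ell\le j_\ell$ for all $\ell$;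 $f\preceq g$ iff $f\preceq_{sh}g^*\preceq_w g$ for some $g^*$. $\mathcal{I}$ is decreasing if $f\in\mathcal{I}$, $g\preceq f$ imply $g\in\mathcal{I}$; $\mathcal{I}_r=\{f\in\mathcal{I}:\deg f=r\}$. ${\rm LTA}(m,2)$ is the set of pairs $(\mathbf{B},\varepsilon)$ with $\mathbf{B}=(b_{i,j})\in\mathbb{F}_2^{m\times m}$ lower triangular with ones on the diagonal and $\varepsilon\in\mathbb{F}_2^m$; for a monomial $u$, $(\mathbf{B},\varepsilon)\cdot u\in\mathbf{R}_m$ replaces each variable $x_i$ of $u$ by $x_i+\sum_{j<i}b_{i,j}x_j+\varepsilon_i$. For a monomial $g$, ${\rm LTA}(m,2)_g$ is the set of $(\mathbf{B},\varepsilon)\in{\rm LTA}(m,2)$ with $\varepsilon_i=0$ for $i\notin\operatorname{ind}(g)$ and $b_{i,j}=0$ (for $j<i$) whenever $i\notin\operatorname{ind}(g)$ or $j\in\operatorname{ind}(g)$. For $G\subseteq{\rm LTA}(m,2)$ and monomial $u$, $G\cdot u=\{(\mathbf{B},\varepsilon)\cdot u:(\mathbf{B},\varepsilon)\in G\}$. For sets $\mathcal{S},\mathcal{T}\subseteq\mathbf{R}_m$: $\mathcal{S}+\mathcal{T}=\{s+t\}$, $\mathcal{S}\cdot\mathcal{T}=\{st\}$; $G\cdot h\cdot(\mathcal{S})$ is the product of the set $G\cdot h$ with the set $\mathcal{S}$. *)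

theory Defs
  imports Main "HOL-Library.Z2"
begin

text \<open>The ring R_m = F_2[x_0..x_{m-1}]/(x_i^2 - x_i) is represented, via the standard
  isomorphism, as the ring of F_2-valued functions on F_2^m.  A point of F_2^m is a
  function nat => bit vanishing at indices >= m; an element of R_m is a function on
  points that is 0 outside pts m (canonical representative).\<close>

type_synonym pt = "nat \<Rightarrow> bit"
type_synonym relt = "pt \<Rightarrow> bit"

definition pts :: "nat \<Rightarrow> pt set" where
  "pts m = {x. \<forall>i\<ge>m. x i = 0}"

definition canon :: "nat \<Rightarrow> relt \<Rightarrow> relt" where
  "canon m F = (\<lambda>x. if x \<in> pts m then F x else 0)"

text \<open>Monomials of M_m are represented by their index sets ind(f), subsets of {0..<m}.
  gcd is intersection, f/h is set difference, degree is card.\<close>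

definition monomials :: "nat \<Rightarrow> nat set set" where
  "monomials m = Pow {0..<m}"

definition weak_le :: "nat set \<Rightarrow> nat set \<Rightarrow> bool" where
  "weak_le f g \<longleftrightarrow> f \<subseteq> g"

definition shift_le :: "nat set \<Rightarrow> nat set \<Rightarrow> bool" where
  "shift_le f g \<longleftrightarrow> finite f \<and> finite g \<and> card f = card g \<and>
     (\<forall>l < card f. sorted_list_of_set f ! l \<le> sorted_list_of_set g ! l)"

definition mon_le :: "nat set \<Rightarrow> nat set \<Rightarrow> bool" where
  "mon_le f g \<longleftrightarrow> (\<exists>g'. shift_le f g' \<and> weak_le g' g)"

definition decreasing :: "nat \<Rightarrow> nat set set \<Rightarrow> bool" where
  "decreasing m I \<longleftrightarrow> I \<subseteq> monomials m \<and>
     (\<forall>f\<in>I. \<forall>g. mon_le g f \<longrightarrow> g \<in> I)"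

text \<open>LTA(m,2): pairs (B, eps); B is m x m lower triangular with unit diagonal,
  entries outside the m x m block fixed to the identity pattern, eps vanishes at
  indices >= m (so that distinct pairs correspond to distinct matrices/vectors).\<close>

definition LTA :: "nat \<Rightarrow> ((nat \<Rightarrow> nat \<Rightarrow> bit) \<times> (nat \<Rightarrow> bit)) set" where
  "LTA m = {(B, e). (\<forall>i j. i < j \<longrightarrow> B i j = 0) \<and> (\<forall>i. B i i = 1) \<and>
      (\<forall>i j. (m \<le> i \<or> m \<le> j) \<longrightarrow> B i j = (if i = j then 1 else 0)) \<and>
      (\<forall>i\<ge>m. e i = 0)}"

definition LTA_sub :: "nat \<Rightarrow> nat set \<Rightarrow> ((nat \<Rightarrow> nat \<Rightarrow> bit) \<times> (nat \<Rightarrow> bit)) set" where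
  "LTA_sub m g = {(B, e) \<in> LTA m. (\<forall>i. i \<notin> g \<longrightarrow> e i = 0) \<and>
      (\<forall>i j. j < i \<and> (i \<notin> g \<or> j \<in> g) \<longrightarrow> B i j = 0)}"

definition act :: "nat \<Rightarrow> (nat \<Rightarrow> nat \<Rightarrow> bit) \<times> (nat \<Rightarrow> bit) \<Rightarrow> nat set \<Rightarrow> relt" where
  "act m Be u = canon m (\<lambda>x. \<Prod>i\<in>u. x i + (\<Sum>j<i. fst Be i j * x j) + snd Be i)"

definition orbit :: "nat \<Rightarrow> ((nat \<Rightarrow> nat \<Rightarrow> bit) \<times> (nat \<Rightarrow> bit)) set \<Rightarrow> nat set \<Rightarrow> relt set" where
  "orbit m G u = (\<lambda>Be. act m Be u) ` G"

definition set_plus :: "relt set \<Rightarrow> relt set \<Rightarrow> relt set" where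
  "set_plus S T = {(\<lambda>x. s x + t x) | s t. s \<in> S \<and> t \<in> T}"

definition set_times :: "relt set \<Rightarrow> relt set \<Rightarrow> relt set" where
  "set_times S T = {(\<lambda>x. s x * t x) | s t. s \<in> S \<and> t \<in> T}"

end

theory Submission
  imports Defs "HOL-Library.FuncSet"
begin
declare add_bit_eq_xor[simp del] mult_bit_eq_and[simp del]

lemma bit_cases2: "(x::bit) = 0 \<or> x = 1" by (cases x) auto
lemma bit_add_self[simp]: "(x::bit) + x = 0" by (cases x) auto
lemma finite_bit: "finite (UNIV::bit set)"
proof -
  have eq: "UNIV = {0::bit,1}" using bit_cases2 by blast
  have "finite {0::bit,1}" by simp
  then show ?thesis by (simp only: eq)
qed
lemma ex_bit: "(\<exists>x::bit. P x) \<longleftrightarrow> P 0 \<or> P 1" by (metis bit_cases2)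

definition cc :: "(nat \<Rightarrow> nat \<Rightarrow> bit) \<Rightarrow> (nat \<Rightarrow> bit) \<Rightarrow> nat \<Rightarrow> pt \<Rightarrow> bit" where
  "cc B e i x = (\<Sum>j<i. B i j * x j) + e i"
definition FF :: "(nat \<Rightarrow> nat \<Rightarrow> bit) \<Rightarrow> (nat \<Rightarrow> bit) \<Rightarrow> nat \<Rightarrow> pt \<Rightarrow> bit" where
  "FF B e i x = x i + cc B e i x"

lemma act_eq: "act m (B,e) u = canon m (\<lambda>x. \<Prod>i\<in>u. FF B e i x)"
  unfolding act_def FF_def cc_def by (simp add: add.assoc)
lemma bit3: "(a::bit) + a + a = a" by (cases a) auto

lemma cc_three: "cc B e i (\<lambda>j. x j + y j + z j) = cc B e i x + cc B e i y + cc B e i z"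
proof -
  have "cc B e i (\<lambda>j. x j + y j + z j) = ((\<Sum>j<i. B i j * x j) + (\<Sum>j<i. B i j * y j) + (\<Sum>j<i. B i j * z j)) + (e i + e i + e i)"
    unfolding cc_def by (simp add: distrib_left sum.distrib)
  also have "\<dots> = ((\<Sum>j<i. B i j * x j) + e i) + ((\<Sum>j<i. B i j * y j) + e i) + ((\<Sum>j<i. B i j * z j) + e i)"
    by (simp only: ac_simps)
  finally show ?thesis unfolding cc_def by (simp only: bit3)
qed

lemma FF_three: "FF B e i (\<lambda>j. x j + y j + z j) = FF B e i x + FF B e i y + FF B e i z"
  unfolding FF_def cc_three by (simp only: ac_simps)

lemma cc_agree: "(\<And>j. j < i \<Longrightarrow> x j = y j) \<Longrightarrow> cc B e i x = cc B e i y"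
  unfolding cc_def by (auto intro!: sum.cong)

lemma mult_bit_one: "(a::bit) * b = 1 \<longleftrightarrow> a = 1 \<and> b = 1"
  by (cases a; cases b) auto

lemma prod_bit_one: "finite A \<Longrightarrow> (\<Prod>i\<in>A. (F i::bit)) = 1 \<longleftrightarrow> (\<forall>i\<in>A. F i = 1)"
  by (induction A rule: finite_induct) (simp_all add: mult_bit_one)
lemma Q4: "\<exists>q1 q2 q3 q4::bit. q1*q2 + q3*q4 = 1 \<and>
   (q1+c1)*(q2+c2) + (q3+1+c3)*(q4+1+c4) = 1"
  apply (cases c1; cases c2; cases c3; cases c4)
  apply (simp_all only: ex_bit)
  apply simp_all
  done
lemma solve:
  fixes Bk :: "nat \<Rightarrow> nat \<Rightarrow> nat \<Rightarrow> bit" and ek :: "nat \<Rightarrow> nat \<Rightarrow> bit"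
  assumes fin: "finite T"
  shows "\<exists>x. (\<forall>j. j \<notin> T \<longrightarrow> x j = u j) \<and> (\<forall>k\<in>T. FF (Bk k) (ek k) k x = w k)"
proof -
  define ext where "ext v = (\<lambda>j. if j \<in> T then v j else u j)" for v :: pt
  define G where "G v = restrict (\<lambda>k. FF (Bk k) (ek k) k (ext v)) T" for v
  define W where "W = PiE T (\<lambda>_. UNIV :: bit set)"
  have inj: "inj_on G W"
  proof (rule inj_onI, rule ccontr)
    fix v v' assume v: "v \<in> W" and v': "v' \<in> W" and eq: "G v = G v'" and ne: "v \<noteq> v'"
    define D where "D = {j\<in>T. v j \<noteq> v' j}"
    have "D \<noteq> {}"
    proof
      assume "D = {}"
      have "v j = v' j" for j
      proof (cases "j \<in> T")
        case True
        then show ?thesis using \<open>D = {}\<close> unfolding D_def by blast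
      next
        case False
        then show ?thesis using PiE_arb[OF v[unfolded W_def] False] PiE_arb[OF v'[unfolded W_def] False] by simp
      qed
      with ne show False by (simp add: fun_eq_iff)
    qed
    have finD: "finite D" using fin unfolding D_def by auto
    define t where "t = Min D"
    have tD: "t \<in> D" using \<open>D \<noteq> {}\<close> finD t_def by auto
    have lt: "ext v j = ext v' j" if "j < t" for j
    proof (cases "j \<in> T")
      case True
      then have "j \<notin> D" using that finD t_def by (meson Min_le not_le)
      then show ?thesis using True unfolding D_def ext_def by auto
    next
      case False
      then show ?thesis unfolding ext_def by simp
    qed
    have "cc (Bk t) (ek t) t (ext v) = cc (Bk t) (ek t) t (ext v')"
      by (rule cc_agree) (rule lt)
    moreover have "G v t = G v' t" using eq by simp
    ultimately have "ext v t = ext v' t" using tD unfolding G_def FF_def D_def by simp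
    then show False using tD unfolding D_def ext_def by auto
  qed
  have sub: "G ` W \<subseteq> W" unfolding G_def W_def by auto
  have "finite W" unfolding W_def using fin by (intro finite_PiE) (auto simp: finite_bit)
  then have "G ` W = W" using endo_inj_surj sub inj by blast
  moreover have "restrict w T \<in> W" unfolding W_def by simp
  ultimately have "restrict w T \<in> G ` W" by simp
  then obtain v where "restrict w T = G v" "v \<in> W" by (rule imageE)
  then have "\<forall>k\<in>T. G v k = restrict w T k" by metis
  then have "\<forall>k\<in>T. FF (Bk k) (ek k) k (ext v) = w k" unfolding G_def by simp
  moreover have "\<forall>j. j \<notin> T \<longrightarrow> ext v j = u j" unfolding ext_def by simp
  ultimately show ?thesis by blast
qed

lemma plus_one_iff: "(a::bit) + c = 1 \<longleftrightarrow> a = 1 + c"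
  by (cases a; cases c) auto

lemma one_plus_cancel: "1 + (a::bit) = 1 + b \<Longrightarrow> a = b"
  by (cases a; cases b) auto

lemma bit_eqI: "((a::bit) = 1 \<longleftrightarrow> b = 1) \<Longrightarrow> a = b"
  by (cases a; cases b) auto

lemma canon_out: "x \<notin> pts m \<Longrightarrow> canon m F x = 0"
  unfolding canon_def by simp
lemma canon_in: "x \<in> pts m \<Longrightarrow> canon m F x = F x"
  unfolding canon_def by simp

lemma pts_agree:
  assumes "x \<in> pts m" "S \<subseteq> {..<m}" "\<forall>j. j \<notin> S \<longrightarrow> y j = x j"
  shows "y \<in> pts m"
proof -
  have "y i = 0" if "m \<le> i" for i
  proof -
    have "i \<notin> S" using assms(2) that by auto
    then have "y i = x i" using assms(3) by simp
    also have "x i = 0" using assms(1) that unfolding pts_def by simp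
    finally show ?thesis .
  qed
  then show ?thesis unfolding pts_def by simp
qed

lemma pts_three: "x \<in> pts m \<Longrightarrow> y \<in> pts m \<Longrightarrow> z \<in> pts m \<Longrightarrow> (\<lambda>j. x j + y j + z j) \<in> pts m"
  unfolding pts_def by simp

lemma cc_off: "(B,e) \<in> LTA_sub m S \<Longrightarrow> h \<subseteq> S \<Longrightarrow> (\<forall>j. j \<notin> h \<longrightarrow> x j = y j) \<Longrightarrow> cc B e i x = cc B e i y"
  unfolding cc_def LTA_sub_def
  by (intro arg_cong[where f="\<lambda>s. s + e i"] sum.cong) auto

lemma S_char: "(B,e) \<in> LTA_sub m h \<Longrightarrow> finite h \<Longrightarrow> x \<in> pts m \<Longrightarrow>
   act m (B,e) h x = 1 \<longleftrightarrow> (\<forall>i\<in>h. x i = 1 + cc B e i x)"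
  unfolding act_eq canon_in FF_def by (simp add: prod_bit_one plus_one_iff canon_def)

definition lift :: "(nat \<Rightarrow> nat \<Rightarrow> bit) \<Rightarrow> (nat \<Rightarrow> bit) \<Rightarrow> nat set \<Rightarrow> pt \<Rightarrow> pt" where
  "lift B e h x = (\<lambda>j. if j \<in> h then 1 + cc B e j x else x j)"

lemma lift_props:
  assumes "(B,e) \<in> LTA_sub m h" "finite h" "h \<subseteq> {..<m}" "x \<in> pts m"
  shows "lift B e h x \<in> pts m" "\<forall>j. j \<notin> h \<longrightarrow> lift B e h x j = x j" "act m (B,e) h (lift B e h x) = 1"
proof -
  show ag: "\<forall>j. j \<notin> h \<longrightarrow> lift B e h x j = x j" unfolding lift_def by simp
  show P: "lift B e h x \<in> pts m" using pts_agree[OF assms(4) assms(3) ag] .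
  have "\<forall>i\<in>h. lift B e h x i = 1 + cc B e i (lift B e h x)"
  proof
    fix i assume "i \<in> h"
    have "cc B e i (lift B e h x) = cc B e i x"
      by (rule cc_off[OF assms(1) order_refl]) (simp add: ag)
    then show "lift B e h x i = 1 + cc B e i (lift B e h x)" using \<open>i \<in> h\<close> unfolding lift_def by simp
  qed
  then show "act m (B,e) h (lift B e h x) = 1" using S_char[OF assms(1,2) P] by simp
qed

definition Qf where
  "Qf B1 e1 B2 e2 A C x = (\<Prod>i\<in>A. FF B1 e1 i x) + (\<Prod>i\<in>C. FF B2 e2 i x)"

lemma T3:
  assumes d: "a1 \<noteq> a2" "b1 \<noteq> b2" "a1 \<noteq> b1" "a1 \<noteq> b2" "a2 \<noteq> b1" "a2 \<noteq> b2"
    and Tm: "{a1,a2,b1,b2} \<subseteq> {..<m}" and u: "u \<in> pts m"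
  shows "\<exists>x1 x2. x1 \<in> pts m \<and> x2 \<in> pts m \<and> Qf B1 e1 B2 e2 {a1,a2} {b1,b2} x1 = 1 \<and>
     Qf B1 e1 B2 e2 {a1,a2} {b1,b2} x2 = 1 \<and> Qf B1 e1 B2 e2 {a1,a2} {b1,b2} (\<lambda>j. x1 j + x2 j + u j) = 1"
proof -
  define T where "T = {a1,a2,b1,b2}"
  define Bk where "Bk k = (if k = a1 \<or> k = a2 then B1 else B2)" for k
  define ek where "ek k = (if k = a1 \<or> k = a2 then e1 else e2)" for k
  have Qx: "Qf B1 e1 B2 e2 {a1,a2} {b1,b2} x = FF (Bk a1) (ek a1) a1 x * FF (Bk a2) (ek a2) a2 x
      + FF (Bk b1) (ek b1) b1 x * FF (Bk b2) (ek b2) b2 x" for x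
    unfolding Qf_def Bk_def ek_def using d by simp
  define c1 where "c1 = FF (Bk a1) (ek a1) a1 u"
  define c2 where "c2 = FF (Bk a2) (ek a2) a2 u"
  define c3 where "c3 = FF (Bk b1) (ek b1) b1 u"
  define c4 where "c4 = FF (Bk b2) (ek b2) b2 u"
  obtain q1 q2 q3 q4 :: bit where q: "q1*q2 + q3*q4 = 1"
    "(q1+c1)*(q2+c2) + (q3+1+c3)*(q4+1+c4) = 1" using Q4 by blast
  have finT: "finite T" unfolding T_def by simp
  obtain x1 where x1: "\<forall>j. j \<notin> T \<longrightarrow> x1 j = u j"
    "\<forall>k\<in>T. FF (Bk k) (ek k) k x1 = (\<lambda>k. if k = b1 \<or> k = b2 then 1 else 0) k"
    using solve[OF finT, where u=u and Bk=Bk and ek=ek and w="\<lambda>k. if k = b1 \<or> k = b2 then 1 else 0"] by blast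
  obtain x2 where x2: "\<forall>j. j \<notin> T \<longrightarrow> x2 j = u j"
    "\<forall>k\<in>T. FF (Bk k) (ek k) k x2 = (\<lambda>k. if k = a1 then q1 else if k = a2 then q2 else if k = b1 then q3 else q4) k"
    using solve[OF finT, where u=u and Bk=Bk and ek=ek and w="\<lambda>k. if k = a1 then q1 else if k = a2 then q2 else if k = b1 then q3 else q4"] by blast
  have TT: "T \<subseteq> {..<m}" using Tm unfolding T_def .
  have p1: "x1 \<in> pts m" using pts_agree[OF u TT] x1(1) by blast
  have p2: "x2 \<in> pts m" using pts_agree[OF u TT] x2(1) by blast
  have v1: "FF (Bk a1) (ek a1) a1 x1 = 0" "FF (Bk a2) (ek a2) a2 x1 = 0"
    "FF (Bk b1) (ek b1) b1 x1 = 1" "FF (Bk b2) (ek b2) b2 x1 = 1"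
    using x1(2) d unfolding T_def by auto
  have v2: "FF (Bk a1) (ek a1) a1 x2 = q1" "FF (Bk a2) (ek a2) a2 x2 = q2"
    "FF (Bk b1) (ek b1) b1 x2 = q3" "FF (Bk b2) (ek b2) b2 x2 = q4"
    using x2(2) d unfolding T_def by auto
  have "Qf B1 e1 B2 e2 {a1,a2} {b1,b2} x1 = 1" unfolding Qx v1 by simp
  moreover have "Qf B1 e1 B2 e2 {a1,a2} {b1,b2} x2 = 1" unfolding Qx v2 using q(1) .
  moreover have "Qf B1 e1 B2 e2 {a1,a2} {b1,b2} (\<lambda>j. x1 j + x2 j + u j) = 1"
    unfolding Qx FF_three v1 v2 c1_def[symmetric] c2_def[symmetric] c3_def[symmetric] c4_def[symmetric]
    using q(2) by (simp add: ac_simps)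
  ultimately show ?thesis using p1 p2 by blast
qed

lemma Qf_off:
  assumes "(B1,e1) \<in> LTA_sub m f" "(B2,e2) \<in> LTA_sub m g" "h \<subseteq> f" "h \<subseteq> g"
    "A \<inter> h = {}" "C \<inter> h = {}" "\<forall>j. j \<notin> h \<longrightarrow> x j = y j"
  shows "Qf B1 e1 B2 e2 A C x = Qf B1 e1 B2 e2 A C y"
proof -
  have "(\<Prod>i\<in>A. FF B1 e1 i x) = (\<Prod>i\<in>A. FF B1 e1 i y)"
  proof (rule prod.cong[OF refl])
    fix i assume "i \<in> A"
    then have "i \<notin> h" using assms(5) by blast
    then show "FF B1 e1 i x = FF B1 e1 i y" unfolding FF_def
      using cc_off[OF assms(1) assms(3) assms(7)] assms(7) by simp
  qed
  moreover have "(\<Prod>i\<in>C. FF B2 e2 i x) = (\<Prod>i\<in>C. FF B2 e2 i y)"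
  proof (rule prod.cong[OF refl])
    fix i assume "i \<in> C"
    then have "i \<notin> h" using assms(6) by blast
    then show "FF B2 e2 i x = FF B2 e2 i y" unfolding FF_def
      using cc_off[OF assms(2) assms(4) assms(7)] assms(7) by simp
  qed
  ultimately show ?thesis unfolding Qf_def by simp
qed

lemma bit_cancel3: "(a::bit) + b + (a + b + c) = c"
  by (cases a; cases b; cases c) auto

lemma key:
  assumes fh: "finite h" "h \<subseteq> {..<m}" "h \<subseteq> f" "h \<subseteq> g"
    and AC: "{a1,a2} \<inter> h = {}" "{b1,b2} \<inter> h = {}"
    and d: "a1 \<noteq> a2" "b1 \<noteq> b2" "a1 \<noteq> b1" "a1 \<noteq> b2" "a2 \<noteq> b1" "a2 \<noteq> b2"
    and Tm: "{a1,a2,b1,b2} \<subseteq> {..<m}"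
    and Be: "(B,e) \<in> LTA_sub m h" "(B',e') \<in> LTA_sub m h" "(B1,e1) \<in> LTA_sub m f"
      "(B2,e2) \<in> LTA_sub m g" "(C1,d1) \<in> LTA_sub m f" "(C2,d2) \<in> LTA_sub m g"
    and eq: "\<And>x. act m (B,e) h x * canon m (Qf B1 e1 B2 e2 {a1,a2} {b1,b2}) x
        = act m (B',e') h x * canon m (Qf C1 d1 C2 d2 {a1,a2} {b1,b2}) x"
  shows "act m (B,e) h = act m (B',e') h \<and>
     canon m (Qf B1 e1 B2 e2 {a1,a2} {b1,b2}) = canon m (Qf C1 d1 C2 d2 {a1,a2} {b1,b2})"
proof -
  define s where "s = act m (B,e) h"
  define s' where "s' = act m (B',e') h"
  define t where "t = canon m (Qf B1 e1 B2 e2 {a1,a2} {b1,b2})"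
  define t' where "t' = canon m (Qf C1 d1 C2 d2 {a1,a2} {b1,b2})"
  have eq': "s x * t x = s' x * t' x" for x unfolding s_def s'_def t_def t'_def by (rule eq)
  have tdep: "t y = t x" "t' y = t' x" if "x \<in> pts m" "\<forall>j. j \<notin> h \<longrightarrow> y j = x j" for x y
  proof -
    have y: "y \<in> pts m" using pts_agree[OF that(1) fh(2) that(2)] .
    have ag: "\<forall>j. j \<notin> h \<longrightarrow> y j = x j" using that(2) by blast
    show "t y = t x" unfolding t_def canon_in[OF y] canon_in[OF that(1)]
      by (rule Qf_off[OF Be(3) Be(4) fh(3) fh(4) AC ag])
    show "t' y = t' x" unfolding t'_def canon_in[OF y] canon_in[OF that(1)]
      by (rule Qf_off[OF Be(5) Be(6) fh(3) fh(4) AC ag])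
  qed
  have t1: "t' x = 1" if x: "x \<in> pts m" "t x = 1" for x
  proof -
    define y where "y = lift B e h x"
    note L = lift_props[OF Be(1) fh(1) fh(2) x(1), folded y_def]
    have "t y = 1" using tdep(1)[OF x(1) L(2)] x(2) by simp
    moreover have "s y = 1" using L(3) unfolding s_def .
    ultimately have "s' y * t' y = 1" using eq'[of y] by simp
    then have "t' y = 1" by (simp add: mult_bit_one)
    then show ?thesis using tdep(2)[OF x(1) L(2)] by simp
  qed
  have t2: "t x = 1" if x: "x \<in> pts m" "t' x = 1" for x
  proof -
    define y where "y = lift B' e' h x"
    note L = lift_props[OF Be(2) fh(1) fh(2) x(1), folded y_def]
    have "t' y = 1" using tdep(2)[OF x(1) L(2)] x(2) by simp
    moreover have "s' y = 1" using L(3) unfolding s'_def .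
    ultimately have "s y * t y = 1" using eq'[of y] by simp
    then have "t y = 1" by (simp add: mult_bit_one)
    then show ?thesis using tdep(1)[OF x(1) L(2)] by simp
  qed
  have tt: "t = t'"
  proof
    fix x show "t x = t' x"
    proof (cases "x \<in> pts m")
      case True
      then show ?thesis using t1 t2 by (intro bit_eqI) blast
    next
      case False
      then show ?thesis unfolding t_def t'_def by (simp add: canon_out)
    qed
  qed
  have cceq: "cc B e i x = cc B' e' i x" if i: "i \<in> h" and x: "x \<in> pts m" "t x = 1" for i x
  proof -
    define y where "y = lift B e h x"
    note L = lift_props[OF Be(1) fh(1) fh(2) x(1), folded y_def]
    have "t y = 1" using tdep(1)[OF x(1) L(2)] x(2) by simp
    moreover have "s y = 1" using L(3) unfolding s_def .
    ultimately have "s' y * t' y = 1" using eq'[of y] by simp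
    then have "s' y = 1" by (simp add: mult_bit_one)
    then have "y i = 1 + cc B' e' i y" using S_char[OF Be(2) fh(1) L(1)] i unfolding s'_def by blast
    moreover have "cc B' e' i y = cc B' e' i x" by (rule cc_off[OF Be(2) order_refl L(2)])
    moreover have "y i = 1 + cc B e i x" using i unfolding y_def lift_def by simp
    ultimately show ?thesis using one_plus_cancel by metis
  qed
  have ccall: "cc B e i u = cc B' e' i u" if i: "i \<in> h" and u: "u \<in> pts m" for i u
  proof -
    obtain x1 x2 where X: "x1 \<in> pts m" "x2 \<in> pts m" "Qf B1 e1 B2 e2 {a1,a2} {b1,b2} x1 = 1"
      "Qf B1 e1 B2 e2 {a1,a2} {b1,b2} x2 = 1" "Qf B1 e1 B2 e2 {a1,a2} {b1,b2} (\<lambda>j. x1 j + x2 j + u j) = 1"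
      using T3[OF d Tm u] by blast
    define x3 where "x3 = (\<lambda>j. x1 j + x2 j + u j)"
    have p3: "x3 \<in> pts m" unfolding x3_def by (rule pts_three[OF X(1) X(2) u])
    have tx: "t x1 = 1" "t x2 = 1" "t x3 = 1"
      unfolding t_def canon_in[OF X(1)] canon_in[OF X(2)] canon_in[OF p3] using X(3-5) x3_def by auto
    have ueq: "u = (\<lambda>j. x1 j + x2 j + x3 j)" unfolding x3_def by (simp add: bit_cancel3)
    have "cc B e i u = cc B e i x1 + cc B e i x2 + cc B e i x3" by (subst ueq) (rule cc_three)
    also have "\<dots> = cc B' e' i x1 + cc B' e' i x2 + cc B' e' i x3"
      using cceq[OF i X(1) tx(1)] cceq[OF i X(2) tx(2)] cceq[OF i p3 tx(3)] by simp
    also have "\<dots> = cc B' e' i u" using cc_three[of B' e' i x1 x2 x3] ueq[symmetric] by simp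
    finally show ?thesis .
  qed
  have ss: "s = s'"
  proof
    fix x show "s x = s' x"
    proof (cases "x \<in> pts m")
      case True
      show ?thesis unfolding s_def s'_def act_eq canon_in[OF True] FF_def
        using ccall True by (intro prod.cong) auto
    next
      case False
      then show ?thesis unfolding s_def s'_def act_eq by (simp add: canon_out)
    qed
  qed
  show ?thesis using ss tt unfolding s_def s'_def t_def t'_def by blast
qed

lemma sum_canon: "(\<lambda>x. act m (B1,e1) A x + act m (B2,e2) C x) = canon m (Qf B1 e1 B2 e2 A C)"
  unfolding act_eq Qf_def canon_def by auto

lemma set_times_img: "set_times X Y = (\<lambda>p x. fst p x * snd p x) ` (X \<times> Y)"
  unfolding set_times_def by force

theorem lemma3:
  fixes m r :: nat and I :: "nat set set" and f g h :: "nat set"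
  assumes "m \<ge> 1"
    and "decreasing m I"
    and "I \<noteq> {}"
    and "r = Max (card ` I)"
    and "f \<in> I" and "card f = r"
    and "g \<in> I" and "card g = r"
    and "h = f \<inter> g"
    and "card h + 2 = r"
  shows "card (set_times (orbit m (LTA_sub m h) h)
                 (set_plus (orbit m (LTA_sub m f) (f - h)) (orbit m (LTA_sub m g) (g - h))))
       = card (orbit m (LTA_sub m h) h)
         * card (set_plus (orbit m (LTA_sub m f) (f - h)) (orbit m (LTA_sub m g) (g - h)))"
proof -
  have fm: "f \<subseteq> {..<m}" "g \<subseteq> {..<m}"
    using assms(2,5,7) unfolding decreasing_def monomials_def by (auto simp: atLeast0LessThan)
  have ff: "finite f" "finite g" using fm finite_subset by auto
  have hs: "h \<subseteq> f" "h \<subseteq> g" using assms(9) by auto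
  have fh: "finite h" "h \<subseteq> {..<m}" using hs ff fm by (auto intro: finite_subset)
  have "card (f - h) = 2" using card_Diff_subset[OF fh(1) hs(1)] assms(6,10) by simp
  then obtain a1 a2 where A: "f - h = {a1,a2}" "a1 \<noteq> a2" by (auto simp: card_2_iff)
  have "card (g - h) = 2" using card_Diff_subset[OF fh(1) hs(2)] assms(8,10) by simp
  then obtain b1 b2 where C: "g - h = {b1,b2}" "b1 \<noteq> b2" by (auto simp: card_2_iff)
  have AC: "{a1,a2} \<inter> h = {}" "{b1,b2} \<inter> h = {}" using A(1) C(1) by auto
  have dd: "a1 \<noteq> b1" "a1 \<noteq> b2" "a2 \<noteq> b1" "a2 \<noteq> b2" using A(1) C(1) assms(9) by auto
  have Tm: "{a1,a2,b1,b2} \<subseteq> {..<m}" using A(1) C(1) fm by auto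
  define X where "X = orbit m (LTA_sub m h) h"
  define Y where "Y = set_plus (orbit m (LTA_sub m f) (f - h)) (orbit m (LTA_sub m g) (g - h))"
  have Xe: "\<exists>B e. (B,e) \<in> LTA_sub m h \<and> s = act m (B,e) h" if "s \<in> X" for s
    using that unfolding X_def orbit_def by auto
  have Ye: "\<exists>B1 e1 B2 e2. (B1,e1) \<in> LTA_sub m f \<and> (B2,e2) \<in> LTA_sub m g \<and>
      t = canon m (Qf B1 e1 B2 e2 {a1,a2} {b1,b2})" if tY: "t \<in> Y" for t
  proof -
    obtain s1 s2 where t: "t = (\<lambda>x. s1 x + s2 x)" "s1 \<in> orbit m (LTA_sub m f) (f - h)"
      "s2 \<in> orbit m (LTA_sub m g) (g - h)" using tY unfolding Y_def set_plus_def by blast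
    obtain B1 e1 where 1: "(B1,e1) \<in> LTA_sub m f" "s1 = act m (B1,e1) (f - h)"
      using t(2) unfolding orbit_def by auto
    obtain B2 e2 where 2: "(B2,e2) \<in> LTA_sub m g" "s2 = act m (B2,e2) (g - h)"
      using t(3) unfolding orbit_def by auto
    have "t = canon m (Qf B1 e1 B2 e2 {a1,a2} {b1,b2})"
      unfolding t(1) 1(2) 2(2) sum_canon A(1)[symmetric] C(1)[symmetric] ..
    then show ?thesis using 1(1) 2(1) by blast
  qed
  have inj: "inj_on (\<lambda>p x. fst p x * snd p x) (X \<times> Y)"
  proof (rule inj_onI)
    fix p q assume p: "p \<in> X \<times> Y" and q: "q \<in> X \<times> Y"
      and pq: "(\<lambda>x. fst p x * snd p x) = (\<lambda>x. fst q x * snd q x)"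
    obtain B e where 1: "(B,e) \<in> LTA_sub m h" "fst p = act m (B,e) h" using Xe p by force
    obtain B' e' where 2: "(B',e') \<in> LTA_sub m h" "fst q = act m (B',e') h" using Xe q by force
    obtain B1 e1 B2 e2 where 3: "(B1,e1) \<in> LTA_sub m f" "(B2,e2) \<in> LTA_sub m g"
      "snd p = canon m (Qf B1 e1 B2 e2 {a1,a2} {b1,b2})" using Ye p by force
    obtain C1 d1 C2 d2 where 4: "(C1,d1) \<in> LTA_sub m f" "(C2,d2) \<in> LTA_sub m g"
      "snd q = canon m (Qf C1 d1 C2 d2 {a1,a2} {b1,b2})" using Ye q by force
    have eq: "act m (B,e) h x * canon m (Qf B1 e1 B2 e2 {a1,a2} {b1,b2}) x
        = act m (B',e') h x * canon m (Qf C1 d1 C2 d2 {a1,a2} {b1,b2}) x" for x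
      using fun_cong[OF pq, of x] unfolding 1(2) 2(2) 3(3) 4(3) .
    have "fst p = fst q \<and> snd p = snd q"
      using key[OF fh hs AC A(2) C(2) dd Tm 1(1) 2(1) 3(1) 3(2) 4(1) 4(2) eq]
      unfolding 1(2) 2(2) 3(3) 4(3) .
    then show "p = q" by (simp add: prod_eq_iff)
  qed
  have "card (set_times X Y) = card X * card Y"
    unfolding set_times_img card_image[OF inj] card_cartesian_product ..
  then show ?thesis unfolding X_def Y_def .
qed
end
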